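(* Let $\mathcal F$ be an infinite family of closed convex sets in $\mathbb R^d$ satisfying the $(d+1,d+1)$-property and such that $\bigcap_{A\in\mathcal F}A=\emptyset$. Then there is a unit vector $v\in\mathbb R^d$ such that for every $A\in\mathcal F$ and every $a\in A$ we have $\{a+tv : t\ge0\}\subseteq A$.
   Context: The $(d+1,d+1)$-property means that every $d+1$ members of the family have a common point. *)

theory Defs
  imports "HOL-Analysis.Analysis"
begin

end

theory Submission
  imports Defs
begin

lemma ineq1: "(e::real) > 0 \<Longrightarrow> N \<ge> 0 \<Longrightarrow> e / (2 * (N + 1)) * N < e"
  by (smt (verit, del_insts) divide_divide_eq_right divide_le_0_iff
    divide_mono nonzero_mult_div_cancel_left)
lemma alg1: fixes b::"'a::real_vector" shows "l > 0 \<Longrightarrow> (1 - l) *\<^sub>R b + l *\<^sub>R (s + (t / l) *\<^sub>R u) = b + t *\<^sub>R u + l *\<^sub>R (s - b)"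
proof -
  assume "l > 0"
  then have "l *\<^sub>R ((t/l) *\<^sub>R u) = t *\<^sub>R u" by simp
  then show ?thesis by (simp add: scaleR_add_right scaleR_diff_left scaleR_diff_right)
qed
lemma alg2: fixes a::"'a::real_vector" shows "r \<noteq> 0 \<Longrightarrow> (1 - n / r) *\<^sub>R a + (n / r) *\<^sub>R x = a + n *\<^sub>R ((1 / r) *\<^sub>R (x - a))"
proof -
  assume "r \<noteq> 0"
  have "n *\<^sub>R ((1 / r) *\<^sub>R (x - a)) = (n/r) *\<^sub>R (x - a)" by simp
  then show ?thesis by (simp add: scaleR_add_right scaleR_diff_left scaleR_diff_right)
qed
lemma alg3: fixes a::"'a::real_vector" shows "n \<noteq> 0 \<Longrightarrow> (1 - t / n) *\<^sub>R a + (t / n) *\<^sub>R (a + n *\<^sub>R u) = a + t *\<^sub>R u"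
proof -
  assume "n \<noteq> 0"
  then have "(t / n) *\<^sub>R (n *\<^sub>R u) = t *\<^sub>R u" by simp
  then show ?thesis by (simp add: scaleR_add_right scaleR_diff_left scaleR_diff_right)
qed
lemma nrm: fixes x::"'a::real_normed_vector" shows "x \<noteq> a \<Longrightarrow> norm ((1 / norm (x - a)) *\<^sub>R (x - a)) = 1"
  by simp
lemma rec_base_change:
  fixes A :: "'a::euclidean_space set"
  assumes cl: "closed A" and cv: "convex A" and s: "s \<in> A"
    and ray: "\<And>t. t \<ge> 0 \<Longrightarrow> s + t *\<^sub>R u \<in> A"
    and b: "b \<in> A" and t: "t \<ge> 0"
  shows "b + t *\<^sub>R u \<in> A"
proof -
  have "\<forall>e>0. \<exists>y\<in>A. dist y (b + t *\<^sub>R u) < e"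
  proof (intro allI impI)
    fix e :: real assume e: "e > 0"
    define l where "l = min 1 (e / (2 * (norm (s - b) + 1)))"
    have "2 * (norm (s - b) + 1) > 0" by (smt (verit) norm_ge_zero)
    then have l0: "l > 0" using e by (simp add: l_def)
    have l1: "l \<le> 1" by (simp add: l_def)
    have "s + (t / l) *\<^sub>R u \<in> A" using ray t l0 by simp
    then have "(1 - l) *\<^sub>R b + l *\<^sub>R (s + (t / l) *\<^sub>R u) \<in> A"
      using convexD[OF cv b] l0 l1 by simp
    moreover have "(1 - l) *\<^sub>R b + l *\<^sub>R (s + (t / l) *\<^sub>R u) = b + t *\<^sub>R u + l *\<^sub>R (s - b)"
      using l0 by (rule alg1)
    moreover have "l * norm (s - b) < e"
    proof -
      have "l * norm (s - b) \<le> (e / (2 * (norm (s - b) + 1))) * norm (s - b)"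
        by (intro mult_right_mono) (simp_all add: l_def)
      also have "\<dots> < e" using e norm_ge_zero[of "s - b"] by (rule ineq1)
      finally show ?thesis .
    qed
    ultimately show "\<exists>y\<in>A. dist y (b + t *\<^sub>R u) < e"
      using l0 by (intro bexI[of _ "b + t *\<^sub>R u + l *\<^sub>R (s - b)"]) (auto simp: dist_norm)
  qed
  then show ?thesis using closed_approachable[OF cl] by blast
qed

lemma unbounded_ray:
  fixes S :: "'a::euclidean_space set"
  assumes cl: "closed S" and cv: "convex S" and a: "a \<in> S" and ub: "\<not> bounded S"
  shows "\<exists>u. norm u = 1 \<and> (\<forall>t\<ge>0. a + t *\<^sub>R u \<in> S)"
proof -
  define K where "K n = {u. a + real n *\<^sub>R u \<in> S}" for n :: nat
  have "sphere 0 1 \<inter> \<Inter>(range K) \<noteq> {}"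
  proof (rule compact_imp_fip)
    show "compact (sphere (0::'a) 1)" by simp
    show "closed T" if "T \<in> range K" for T
    proof -
      obtain n where T: "T = K n" using \<open>T \<in> range K\<close> by blast
      have "continuous_on UNIV (\<lambda>u::'a. a + real n *\<^sub>R u)" by (intro continuous_intros)
      then have "closed (UNIV \<inter> (\<lambda>u. a + real n *\<^sub>R u) -` S)"
        using cl by (intro continuous_closed_preimage) auto
      then show ?thesis unfolding T K_def by (simp add: vimage_def)
    qed
    show "sphere 0 1 \<inter> \<Inter>F' \<noteq> {}" if "finite F'" "F' \<subseteq> range K" for F'
    proof -
      obtain N where N: "finite N" "F' = K ` N"
        using \<open>finite F'\<close> \<open>F' \<subseteq> range K\<close> by (meson finite_subset_image)
      define m where "m = Max (insert 0 N)"
      have nm: "n \<le> m" if "n \<in> N" for n using N that by (simp add: m_def)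
      obtain x where x: "x \<in> S" "dist a x > real m"
        using ub unfolding bounded_any_center[of S a] by (meson not_le)
      define r where "r = norm (x - a)"
      have r: "r > real m" using x by (simp add: r_def dist_norm norm_minus_commute)
      define u where "u = (1 / r) *\<^sub>R (x - a)"
      have "x \<noteq> a" using r by (auto simp: r_def)
      then have nu: "norm u = 1" unfolding u_def r_def by (rule nrm)
      have "u \<in> K n" if "n \<in> N" for n
      proof -
        have nr: "real n / r \<le> 1" "real n / r \<ge> 0" using nm[OF that] r by auto
        have "(1 - real n / r) *\<^sub>R a + (real n / r) *\<^sub>R x \<in> S"
          using convexD[OF cv a x(1)] nr by simp
        moreover have "(1 - real n / r) *\<^sub>R a + (real n / r) *\<^sub>R x = a + real n *\<^sub>R u"
          unfolding u_def using r by (intro alg2) auto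
        ultimately show ?thesis by (simp add: K_def)
      qed
      then have "u \<in> sphere 0 1 \<inter> \<Inter>F'" using nu N by simp
      then show ?thesis by blast
    qed
  qed
  then obtain u where u0: "u \<in> sphere 0 1" "\<And>n. u \<in> K n" by blast
  then have u: "norm u = 1" "\<And>n. a + real n *\<^sub>R u \<in> S" by (auto simp: K_def)
  have "a + t *\<^sub>R u \<in> S" if t: "t \<ge> 0" for t
  proof (cases "t = 0")
    case True then show ?thesis using a by simp
  next
    case False
    define n where "n = nat \<lceil>t\<rceil>"
    have tn: "t \<le> real n" "real n > 0" using t False by (auto simp: n_def)
    have "(1 - t / real n) *\<^sub>R a + (t / real n) *\<^sub>R (a + real n *\<^sub>R u) \<in> S"
      using convexD[OF cv a u(2)[of n]] tn t by simp
    moreover have "(1 - t / real n) *\<^sub>R a + (t / real n) *\<^sub>R (a + real n *\<^sub>R u) = a + t *\<^sub>R u"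
      using tn by (intro alg3) auto
    ultimately show ?thesis by simp
  qed
  then show ?thesis using u by blast
qed


lemma fip_F:
  fixes F :: "('a::euclidean_space) set set"
  assumes "infinite F"
    and cc: "\<forall>A\<in>F. closed A \<and> convex A"
    and h: "\<forall>G. G \<subseteq> F \<and> finite G \<and> card G = DIM('a) + 1 \<longrightarrow> \<Inter>G \<noteq> {}"
    and G: "finite G" "G \<subseteq> F"
  shows "\<Inter>G \<noteq> {}"
proof -
  obtain H' where H': "finite H'" "card H' = DIM('a) + 1" "H' \<subseteq> F"
    using infinite_arbitrarily_large[OF \<open>infinite F\<close>] by blast
  define H where "H = G \<union> H'"
  have Hf: "finite H" "H \<subseteq> F" using G H' by (auto simp: H_def)
  have "card H \<ge> DIM('a) + 1" using H' Hf by (metis H_def card_mono sup_ge2)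
  moreover have "\<forall>s\<in>H. convex s" using cc Hf by blast
  moreover have "\<Inter>t \<noteq> {}" if "t \<subseteq> H" "card t = DIM('a) + 1" for t
  proof -
    have "finite t" using that by (metis card.infinite add_is_0 one_neq_zero)
    then show ?thesis using h that Hf by blast
  qed
  ultimately have "\<Inter>H \<noteq> {}" by (rule Helly)
  moreover have "\<Inter>H \<subseteq> \<Inter>G" by (auto simp: H_def)
  ultimately show ?thesis by blast
qed

theorem lemma5p1:
  fixes F :: "('a::euclidean_space) set set"
  assumes "infinite F"
    and "\<forall>A\<in>F. closed A \<and> convex A"
    and "\<forall>G. G \<subseteq> F \<and> finite G \<and> card G = DIM('a) + 1 \<longrightarrow> \<Inter>G \<noteq> {}"
    and "\<Inter>F = {}"
  shows "\<exists>v::'a. norm v = 1 \<and> (\<forall>A\<in>F. \<forall>a\<in>A. \<forall>t::real. t \<ge> 0 \<longrightarrow> a + t *\<^sub>R v \<in> A)"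
proof -
  note fip = fip_F[OF assms(1,2,3)]
  have cc: "closed A" "convex A" if "A \<in> F" for A using assms(2) that by auto
  obtain A0 where A0: "A0 \<in> F" using assms(1) by (metis ex_in_conv finite.emptyI)
  define D where "D A = {u. \<forall>a\<in>A. \<forall>t::real. t \<ge> 0 \<longrightarrow> a + t *\<^sub>R u \<in> A}" for A :: "'a set"
  have "sphere 0 1 \<inter> \<Inter>(D ` F) \<noteq> {}"
  proof (rule compact_imp_fip)
    show "compact (sphere (0::'a) 1)" by simp
    show "closed T" if T: "T \<in> D ` F" for T
    proof -
      obtain A where A: "A \<in> F" "T = D A" using T by blast
      have "D A = (\<Inter>p\<in>A \<times> {t. t \<ge> 0}. UNIV \<inter> (\<lambda>u. fst p + snd p *\<^sub>R u) -` A)"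
        by (auto simp: D_def)
      moreover have "closed (UNIV \<inter> (\<lambda>u. fst p + snd p *\<^sub>R u) -` A)" for p :: "'a \<times> real"
        by (intro continuous_closed_preimage continuous_intros) (auto simp: cc[OF A(1)])
      ultimately show ?thesis using A by (auto intro!: closed_INT)
    qed
    show "sphere 0 1 \<inter> \<Inter>F' \<noteq> {}" if "finite F'" "F' \<subseteq> D ` F" for F'
    proof -
      obtain G where G: "finite G" "G \<subseteq> F" "F' = D ` G"
        using \<open>finite F'\<close> \<open>F' \<subseteq> D ` F\<close> by (meson finite_subset_image)
      define G' where "G' = insert A0 G"
      have G': "finite G'" "G' \<subseteq> F" "G' \<noteq> {}" using G A0 by (auto simp: G'_def)
      define S where "S = \<Inter>G'"
      have Sne: "S \<noteq> {}" unfolding S_def using fip G'(1,2) .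
      have Scl: "closed S" unfolding S_def using G'(2) cc by (intro closed_Inter) blast
      have Scv: "convex S" unfolding S_def using G'(2) cc by (intro convex_Inter) blast
      have "\<not> bounded S"
      proof
        assume "bounded S"
        then have "compact S" using Scl by (simp add: compact_eq_bounded_closed)
        then have "S \<inter> \<Inter>F \<noteq> {}"
        proof (rule compact_imp_fip)
          show "closed T" if "T \<in> F" for T using cc that by blast
          show "S \<inter> \<Inter>F'' \<noteq> {}" if "finite F''" "F'' \<subseteq> F" for F''
          proof -
            have "\<Inter>(G' \<union> F'') \<noteq> {}" using fip G' that by auto
            then show ?thesis by (simp add: S_def Inter_Un_distrib)
          qed
        qed
        then show False using assms(4) by simp
      qed
      obtain a where a: "a \<in> S" using Sne by blast
      obtain u where u: "norm u = 1" "\<And>t. t \<ge> 0 \<Longrightarrow> a + t *\<^sub>R u \<in> S"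
        using unbounded_ray[OF Scl Scv a \<open>\<not> bounded S\<close>] by blast
      have "u \<in> D A" if "A \<in> G" for A
      proof -
        have AG: "A \<in> G'" "A \<in> F" using that G by (auto simp: G'_def)
        have sub: "S \<subseteq> A" using AG by (auto simp: S_def)
        show ?thesis unfolding D_def mem_Collect_eq
        proof (intro ballI allI impI)
          fix b t assume "b \<in> A" "(t::real) \<ge> 0"
          show "b + t *\<^sub>R u \<in> A"
            using rec_base_change[OF cc[OF AG(2)] sub[THEN subsetD, OF a], of u b t] u(2) sub
              \<open>b \<in> A\<close> \<open>t \<ge> 0\<close> by blast
        qed
      qed
      then have "u \<in> sphere 0 1 \<inter> \<Inter>F'" using u(1) G(3) by auto
      then show ?thesis by blast
    qed
  qed
  then obtain v where "v \<in> sphere 0 1" "\<And>A. A \<in> F \<Longrightarrow> v \<in> D A" by blast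
  then show ?thesis by (auto simp: D_def)
qed

end
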